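(* Let $Y(0),Y(1)$ be integrable real potential outcomes and $X$ a random vector in $\mathbb{R}^{d_X}$ with support $\mathcal{X}=\mathcal{X}_0\cup\mathcal{X}_1$, $\mathcal{X}_0\cap\mathcal{X}_1=\emptyset$, with $D=1\{X\in\mathcal{X}_1\}$ and $Y=DY(1)+(1-D)Y(0)$. Suppose $x\mapsto E[Y(d)|X=x]$ is continuous on $\mathcal{X}$ for $d=0,1$, and local comonotonicity holds: for every $x_1\in\mathcal{X}$ there is a neighborhood $N$ of $x_1$ such that for all $x_2\in N\cap\mathcal{X}$, $$E[Y(1)|X=x_1]\geq E[Y(1)|X=x_2]\iff E[Y(0)|X=x_1]\geq E[Y(0)|X=x_2].$$ Let $\mathcal{F}=\mathrm{cl}(\mathrm{int}(\mathcal{X}_1))\cap\mathrm{cl}(\mathrm{int}(\mathcal{X}_0))$ and for $d\in\{0,1\}$ let $g_d$ be a function on $\mathcal{X}_d\cup\mathcal{F}$ with $g_d(x)=E[Y|X=x]$ for $x\in\mathcal{X}_d$ and continuous at each point of $\mathcal{F}$. Suppose that for some $d$ and some $x\in\mathcal{X}_d$ there is a continuous path $p:[0,1]\to\mathcal{X}_d\cup\mathcal{F}$ with $p(0)=x$, $p(1)=x^*\in\mathcal{F}$, and $E[Y|X=p(t)]=E[Y|X=x]$ for all $t\in(0,1)$. Then $E[Y(1)|X=x]=g_1(x^* )$ and $E[Y(0)|X=x]=g_0(x^* )$.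
   Context: Conditional expectation functions are understood as the unique continuous versions; for $z\in\mathcal{X}$, $E[Y|X=z]$ equals $E[Y(d)|X=z]$ when $z\in\mathcal{X}_d$. *)

theory Defs
  imports "HOL-Analysis.Analysis"
begin

(* Observed-outcome CEF: E[Y|X=z] = E[Y(1)|X=z] on X1, E[Y(0)|X=z] on X0
   (continuous versions m1, m0 of E[Y(d)|X=.]) *)
definition obs_cef :: "('a \<Rightarrow> real) \<Rightarrow> ('a \<Rightarrow> real) \<Rightarrow> 'a set \<Rightarrow> 'a \<Rightarrow> real" where
  "obs_cef m0 m1 X1 z = (if z \<in> X1 then m1 z else m0 z)"

definition boundary_set :: "'a::topological_space set \<Rightarrow> 'a set \<Rightarrow> 'a set" where
  "boundary_set X0 X1 = closure (interior X1) \<inter> closure (interior X0)"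

definition locally_comonotone :: "'a::topological_space set \<Rightarrow> ('a \<Rightarrow> real) \<Rightarrow> ('a \<Rightarrow> real) \<Rightarrow> bool" where
  "locally_comonotone X m0 m1 \<longleftrightarrow>
     (\<forall>x1\<in>X. \<exists>N. open N \<and> x1 \<in> N \<and>
        (\<forall>x2\<in>N \<inter> X. (m1 x1 \<ge> m1 x2 \<longleftrightarrow> m0 x1 \<ge> m0 x2)))"

end

theory Submission
  imports Defs
begin

lemma L1:
  fixes f :: "real \<Rightarrow> real"
  assumes a_b: "a \<le> b" and cf: "continuous_on {a..b} f"
    and lm: "\<forall>t\<in>{a..b}. \<exists>e>0. \<forall>s\<in>{a..b}. dist s t < e \<longrightarrow> f s \<le> f t"
  shows "\<forall>s\<in>{a..b}. f s = f a"
proof -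
  obtain m where m: "m \<in> {a..b}" "\<forall>y\<in>{a..b}. f m \<le> f y"
    using continuous_attains_inf[OF compact_Icc _ cf] a_b by auto
  define K where "K = {s\<in>{a..b}. f s = f m}"
  have cl: "closedin (top_of_set {a..b}) K" unfolding K_def
    by (rule continuous_closedin_preimage_constant[OF cf])
  have op: "openin (top_of_set {a..b}) K"
    unfolding openin_euclidean_subtopology_iff
  proof (intro conjI ballI)
    show "K \<subseteq> {a..b}" unfolding K_def by auto
    fix x assume "x \<in> K"
    then have x: "x \<in> {a..b}" "f x = f m" unfolding K_def by auto
    obtain e where e: "e>0" "\<forall>s\<in>{a..b}. dist s x < e \<longrightarrow> f s \<le> f x" using lm x(1) by blast
    show "\<exists>e>0. \<forall>x'\<in>{a..b}. dist x' x < e \<longrightarrow> x' \<in> K"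
      using e x m unfolding K_def by (metis (mono_tags, lifting) mem_Collect_eq order_antisym)
  qed
  have "K \<noteq> {}" using m(1) unfolding K_def by auto
  then have "K = {a..b}" using connected_clopen[THEN iffD1, OF connected_Icc] cl op by blast
  then show ?thesis using a_b unfolding K_def by (metis (mono_tags, lifting) atLeastAtMost_iff mem_Collect_eq order_refl)
qed

lemma LC:
  fixes f :: "real \<Rightarrow> real"
  assumes ab: "a < b" and cf: "continuous_on {a..b} f"
    and h: "\<forall>s. a < s \<and> s < b \<longrightarrow> f s = c"
  shows "\<forall>s\<in>{a..b}. f s = c"
proof -
  have "closedin (top_of_set {a..b}) {s\<in>{a..b}. f s = c}"
    by (rule continuous_closedin_preimage_constant[OF cf])
  then obtain T where T: "closed T" "{s\<in>{a..b}. f s = c} = {a..b} \<inter> T"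
    unfolding closedin_closed by blast
  have "{a<..<b} \<subseteq> T" using T h by auto
  then have "closure {a<..<b} \<subseteq> T" using T(1) by (rule closure_minimal)
  then have "{a..b} \<subseteq> T" using ab by simp
  then show ?thesis using T(2) by blast
qed

lemma abstract:
  fixes ha hb :: "real \<Rightarrow> real"
  assumes ca: "continuous_on {0..1} ha" and cb: "continuous_on {0..1} hb"
    and com: "\<forall>t\<in>{0..1}. \<exists>e>0. \<forall>s\<in>{0..1}. dist s t < e \<longrightarrow> (ha t \<ge> ha s \<longleftrightarrow> hb t \<ge> hb s)"
    and a0: "ha 0 = c" and alt: "\<forall>t\<in>{0<..<1}. ha t = c \<or> hb t = c"
  shows "ha 1 = ha 0 \<and> hb 1 = hb 0"
proof -
  have A: "ha t0 = c" if t0: "0 < t0" "t0 < 1" for t0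
  proof (rule ccontr)
    assume ne: "ha t0 \<noteq> c"
    have cat: "continuous_on {0..t0} ha" using ca t0 by (auto intro: continuous_on_subset)
    define S where "S = {s\<in>{0..t0}. ha s = c}"
    have "closedin (top_of_set {0..t0}) S" unfolding S_def
      by (rule continuous_closedin_preimage_constant[OF cat])
    then have "compact S" using closedin_compact compact_Icc by blast
    moreover have "0 \<in> S" using a0 t0 unfolding S_def by auto
    then have "S \<noteq> {}" by blast
    ultimately obtain al where al: "al \<in> S" "\<forall>y\<in>S. y \<le> al"
      using compact_attains_sup by blast
    have al1: "0 \<le> al" "al \<le> t0" "ha al = c" using al(1) unfolding S_def by auto
    have alt0: "al < t0" using al1 ne by (metis order_le_less)
    have hbc: "\<forall>s. al < s \<and> s < t0 \<longrightarrow> hb s = c"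
    proof (intro allI impI)
      fix s assume s: "al < s \<and> s < t0"
      have "ha s \<noteq> c"
      proof
        assume "ha s = c"
        then have "s \<in> S" using s al1 unfolding S_def by auto
        then have "s \<le> al" using al(2) by blast
        then show False using s by simp
      qed
      then show "hb s = c" using alt s al1 t0 by auto
    qed
    have cbt: "continuous_on {al..t0} hb" using cb t0 al1 by (auto intro: continuous_on_subset)
    have hbc2: "\<forall>s\<in>{al..t0}. hb s = c" using LC[OF alt0 cbt hbc] .
    have cat2: "continuous_on {al..t0} ha" using ca t0 al1 by (auto intro: continuous_on_subset)
    have "\<forall>s\<in>{al..t0}. ha s = ha al"
    proof (rule L1[OF _ cat2])
      show "al \<le> t0" using alt0 by simp
      show "\<forall>t\<in>{al..t0}. \<exists>e>0. \<forall>s\<in>{al..t0}. dist s t < e \<longrightarrow> ha s \<le> ha t"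
      proof
        fix t assume t: "t \<in> {al..t0}"
        then have "t \<in> {0..1}" using al1 t0 by auto
        then obtain e where e: "e>0" "\<forall>s\<in>{0..1}. dist s t < e \<longrightarrow> (ha t \<ge> ha s \<longleftrightarrow> hb t \<ge> hb s)"
          using com by blast
        show "\<exists>e>0. \<forall>s\<in>{al..t0}. dist s t < e \<longrightarrow> ha s \<le> ha t"
        proof (intro exI[of _ e] conjI ballI impI)
          fix s assume s: "s \<in> {al..t0}" "dist s t < e"
          have "s \<in> {0..1}" using s al1 t0 by auto
          moreover have "hb s = c" "hb t = c" using hbc2 s t by auto
          ultimately show "ha s \<le> ha t" using e(2) s(2) by auto
        qed (use e in auto)
      qed
    qed
    then have "ha t0 = c" using al1 alt0 by auto
    then show False using ne by simp
  qed
  have haall: "\<forall>s\<in>{0..1}. ha s = c" using LC[of 0 1 ha c] ca A by simp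
  have "\<forall>s\<in>{0..1}. hb s = hb 0"
  proof (rule L1[OF _ cb])
    show "\<forall>t\<in>{0..1}. \<exists>e>0. \<forall>s\<in>{0..1}. dist s t < e \<longrightarrow> hb s \<le> hb t"
    proof
      fix t :: real assume t: "t \<in> {0..1}"
      then obtain e where e: "e>0" "\<forall>s\<in>{0..1}. dist s t < e \<longrightarrow> (ha t \<ge> ha s \<longleftrightarrow> hb t \<ge> hb s)"
        using com by blast
      show "\<exists>e>0. \<forall>s\<in>{0..1}. dist s t < e \<longrightarrow> hb s \<le> hb t"
      proof (intro exI[of _ e] conjI ballI impI)
        fix s assume s: "s \<in> {0..1}" "dist s t < e"
        have "ha s = c" "ha t = c" using haall s t by auto
        then show "hb s \<le> hb t" using e(2) s by auto
      qed (use e in auto)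
    qed
  qed simp
  then have "hb 1 = hb 0" by (meson atLeastAtMost_iff order_refl zero_le_one)
  moreover have "ha 1 = c" "ha 0 = c" using haall by auto
  ultimately show ?thesis by simp
qed

lemma islimpt_cl_int:
  fixes xs :: "'a::{perfect_space,metric_space}"
  assumes "xs \<in> closure (interior A)"
  shows "xs islimpt A"
proof -
  have "xs islimpt interior A"
  proof (cases "xs \<in> interior A")
    case True
    then show ?thesis using interior_limit_point[of xs "interior A"] by simp
  next
    case False
    then show ?thesis using assms unfolding closure_def by auto
  qed
  then show ?thesis using interior_subset islimpt_subset by blast
qed

lemma lim_eq:
  fixes g m :: "'a::metric_space \<Rightarrow> real"
  assumes lp: "xs islimpt A" and AX: "A \<subseteq> X" and xX: "xs \<in> X" and cm: "continuous_on X m"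
    and cg: "continuous (at xs within B) g" and AB: "A \<subseteq> B" and eq: "\<forall>z\<in>A. g z = m z"
  shows "g xs = m xs"
proof -
  have nt: "at xs within A \<noteq> bot" using lp trivial_limit_within by blast
  have 1: "(g \<longlongrightarrow> g xs) (at xs within A)"
    using cg AB unfolding continuous_within by (rule tendsto_within_subset)
  have "(m \<longlongrightarrow> m xs) (at xs within X)" using cm xX unfolding continuous_on_def by blast
  then have 2: "(m \<longlongrightarrow> m xs) (at xs within A)" using AX by (rule tendsto_within_subset)
  have ev: "eventually (\<lambda>z. g z = m z) (at xs within A)"
    unfolding eventually_at_filter using eq by simp
  have "(m \<longlongrightarrow> g xs) (at xs within A)" using tendsto_cong[OF ev] 1 by simp
  then show ?thesis using tendsto_unique[OF nt _ 2] by simp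
qed

theorem theoremB2:
  fixes X0 X1 :: "(real ^ 'n) set"
    and m0 m1 g0 g1 :: "real ^ 'n \<Rightarrow> real"
    and d :: nat and x xs :: "real ^ 'n" and p :: "real \<Rightarrow> real ^ 'n"
  defines "X \<equiv> X0 \<union> X1"
    and "F \<equiv> boundary_set X0 X1"
    and "EY \<equiv> obs_cef m0 m1 X1"
    and "Xd \<equiv> (\<lambda>k::nat. if k = 1 then X1 else X0)"
    and "g \<equiv> (\<lambda>k::nat. if k = 1 then g1 else g0)"
  assumes supp_closed: "closed X"
    and disj: "X0 \<inter> X1 = {}"
    and cont0: "continuous_on X m0"
    and cont1: "continuous_on X m1"
    and comon: "locally_comonotone X m0 m1"
    and g0_eq: "\<forall>z\<in>X0. g0 z = EY z"
    and g1_eq: "\<forall>z\<in>X1. g1 z = EY z"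
    and g0_cont: "\<forall>z\<in>F. continuous (at z within (X0 \<union> F)) g0"
    and g1_cont: "\<forall>z\<in>F. continuous (at z within (X1 \<union> F)) g1"
    and d01: "d \<in> {0, 1}"
    and x_in: "x \<in> Xd d"
    and p_path: "path p"
    and p_img: "path_image p \<subseteq> Xd d \<union> F"
    and p_start: "pathstart p = x"
    and p_end: "pathfinish p = xs"
    and xs_in: "xs \<in> F"
    and p_const: "\<forall>t\<in>{0<..<1}. EY (p t) = EY x"
  shows "m1 x = g1 xs \<and> m0 x = g0 xs"
proof -
  have FX: "F \<subseteq> X"
  proof -
    have "closure (interior X1) \<subseteq> closure X"
      by (rule closure_mono) (use interior_subset X_def in blast)
    then show ?thesis unfolding F_def boundary_set_def using supp_closed closure_closed by blast
  qed
  have XdX: "Xd d \<subseteq> X" unfolding Xd_def X_def by auto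
  have pc: "continuous_on {0..1} p" using p_path unfolding path_def by simp
  have pX: "p ` {0..1} \<subseteq> X" using p_img FX XdX unfolding path_image_def by blast
  define h1 where "h1 = (\<lambda>t. m1 (p t))"
  define h0 where "h0 = (\<lambda>t. m0 (p t))"
  have c1: "continuous_on {0..1} h1" unfolding h1_def
    by (rule continuous_on_compose2[OF cont1 pc pX])
  have c0: "continuous_on {0..1} h0" unfolding h0_def
    by (rule continuous_on_compose2[OF cont0 pc pX])
  have com: "\<forall>t\<in>{0..1}. \<exists>e>0. \<forall>s\<in>{0..1}. dist s t < e \<longrightarrow> (h1 t \<ge> h1 s \<longleftrightarrow> h0 t \<ge> h0 s)"
  proof
    fix t :: real assume t: "t \<in> {0..1}"
    then have ptX: "p t \<in> X" using pX by blast
    obtain N where N: "open N" "p t \<in> N" "\<forall>x2\<in>N \<inter> X. (m1 (p t) \<ge> m1 x2 \<longleftrightarrow> m0 (p t) \<ge> m0 x2)"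
      using comon ptX unfolding locally_comonotone_def by blast
    obtain r where r: "r > 0" "ball (p t) r \<subseteq> N" using N open_contains_ball by blast
    obtain e where e: "e > 0" "\<forall>s\<in>{0..1}. dist s t < e \<longrightarrow> dist (p s) (p t) < r"
      using pc t r(1) unfolding continuous_on_iff by blast
    show "\<exists>e>0. \<forall>s\<in>{0..1}. dist s t < e \<longrightarrow> (h1 t \<ge> h1 s \<longleftrightarrow> h0 t \<ge> h0 s)"
    proof (intro exI[of _ e] conjI ballI impI)
      fix s assume s: "s \<in> {0..1}" "dist s t < e"
      have "p s \<in> ball (p t) r" using e(2) s by (simp add: dist_commute)
      then have "p s \<in> N \<inter> X" using r(2) pX s(1) by blast
      then show "(h1 t \<ge> h1 s \<longleftrightarrow> h0 t \<ge> h0 s)" using N(3) unfolding h1_def h0_def by blast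
    qed (use e in auto)
  qed
  have com': "\<forall>t\<in>{0..1}. \<exists>e>0. \<forall>s\<in>{0..1}. dist s t < e \<longrightarrow> (h0 t \<ge> h0 s \<longleftrightarrow> h1 t \<ge> h1 s)"
    using com by metis
  have alt: "\<forall>t\<in>{0<..<1}. h1 t = EY x \<or> h0 t = EY x"
  proof
    fix t :: real assume "t \<in> {0<..<1}"
    then have "EY (p t) = EY x" using p_const by blast
    then show "h1 t = EY x \<or> h0 t = EY x" unfolding h1_def h0_def EY_def obs_cef_def
      by (auto split: if_splits)
  qed
  have pse: "p 0 = x" "p 1 = xs" using p_start p_end unfolding pathstart_def pathfinish_def by auto
  have res: "h1 1 = h1 0 \<and> h0 1 = h0 0"
  proof (cases "d = 1")
    case True
    then have "x \<in> X1" using x_in unfolding Xd_def by simp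
    then have "h1 0 = EY x" unfolding h1_def EY_def obs_cef_def using pse by simp
    then show ?thesis using abstract[OF c1 c0 com _ alt] by simp
  next
    case False
    then have "x \<in> X0" using x_in unfolding Xd_def by simp
    then have "x \<notin> X1" using disj by blast
    then have "h0 0 = EY x" unfolding h0_def EY_def obs_cef_def using pse \<open>x \<in> X0\<close> by simp
    moreover have "\<forall>t\<in>{0<..<1}. h0 t = EY x \<or> h1 t = EY x" using alt by blast
    ultimately show ?thesis using abstract[OF c0 c1 com'] by blast
  qed
  have xsX: "xs \<in> X" using xs_in FX by blast
  have g1x: "g1 xs = m1 xs"
  proof (rule lim_eq[of xs X1 X])
    show "xs islimpt X1" using xs_in unfolding F_def boundary_set_def by (intro islimpt_cl_int) blast
    show "\<forall>z\<in>X1. g1 z = m1 z" using g1_eq unfolding EY_def obs_cef_def by simp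
    show "continuous (at xs within (X1 \<union> F)) g1" using g1_cont xs_in by blast
  qed (use X_def xsX cont1 in auto)
  have g0x: "g0 xs = m0 xs"
  proof (rule lim_eq[of xs X0 X])
    show "xs islimpt X0" using xs_in unfolding F_def boundary_set_def by (intro islimpt_cl_int) blast
    show "\<forall>z\<in>X0. g0 z = m0 z" using g0_eq disj unfolding EY_def obs_cef_def by auto
    show "continuous (at xs within (X0 \<union> F)) g0" using g0_cont xs_in by blast
  qed (use X_def xsX cont0 in auto)
  show ?thesis using res g1x g0x pse unfolding h1_def h0_def by simp
qed

end
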